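(* Let $\gamma\in(0,1)$, $c\in\mathbb{R}$, $\sigma^2>0$, and $\alpha_0\in(0,1]$. Define recursively, for $n\ge2$, $$\alpha_{n-1}=\frac{(1-\gamma)\lambda^{n-1}\sigma^2+\big(1-(1-\gamma)\delta^{n-1}\big)^2c^2}{(1-\gamma)^2\lambda^{n-1}\sigma^2+\big(1-(1-\gamma)\delta^{n-1}\big)^2c^2+\sigma^2},$$ where $\delta^1=\alpha_0$, $\lambda^1=\alpha_0^2$, and for $m>1$, $\delta^m=\alpha_{m-1}+(1-(1-\gamma)\alpha_{m-1})\delta^{m-1}$, $\lambda^m=\alpha_{m-1}^2+(1-(1-\gamma)\alpha_{m-1})^2\lambda^{m-1}$. Then $\lim_{n\to\infty}\delta^n=\frac{1}{1-\gamma}$.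
   Context: The formula for $\alpha_{n-1}$ is the prediction-error-minimizing stepsize for approximate value iteration in a single-state, single-action problem with i.i.d. rewards of mean $c$, variance $\sigma^2$, and discount factor $\gamma$; $\delta^n c$ is the mean of the $n$-th value estimate. *)

theory Defs
  imports "HOL-Analysis.Analysis"
begin

definition avi_alpha :: "real \<Rightarrow> real \<Rightarrow> real \<Rightarrow> real \<Rightarrow> real \<Rightarrow> real" where
  "avi_alpha \<gamma> c \<sigma>2 d l =
     ((1 - \<gamma>) * l * \<sigma>2 + (1 - (1 - \<gamma>) * d)^2 * c^2) /
     ((1 - \<gamma>)^2 * l * \<sigma>2 + (1 - (1 - \<gamma>) * d)^2 * c^2 + \<sigma>2)"

text \<open>avi_state m = (delta^(m+1), lambda^(m+1)).\<close>
fun avi_state :: "real \<Rightarrow> real \<Rightarrow> real \<Rightarrow> real \<Rightarrow> nat \<Rightarrow> real \<times> real" where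
  "avi_state \<gamma> c \<sigma>2 a0 0 = (a0, a0^2)"
| "avi_state \<gamma> c \<sigma>2 a0 (Suc m) =
     (let (d, l) = avi_state \<gamma> c \<sigma>2 a0 m;
          a = avi_alpha \<gamma> c \<sigma>2 d l
      in (a + (1 - (1 - \<gamma>) * a) * d, a^2 + (1 - (1 - \<gamma>) * a)^2 * l))"

text \<open>delta^n for n \<ge> 1 (value at n = 0 is irrelevant).\<close>
definition avi_delta :: "real \<Rightarrow> real \<Rightarrow> real \<Rightarrow> real \<Rightarrow> nat \<Rightarrow> real" where
  "avi_delta \<gamma> c \<sigma>2 a0 n = fst (avi_state \<gamma> c \<sigma>2 a0 (n - 1))"

end

theory Submission
  imports Defs
begin

lemma mediant_ge:
  fixes N B D :: real
  assumes "0 \<le> N" "0 \<le> B" "0 < D" "N \<le> D"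
  shows "N / D \<le> (N + B) / (D + B)"
proof -
  have "N * (D + B) \<le> (N + B) * D" using assms by (simp add: algebra_simps mult_left_mono)
  thus ?thesis using assms by (simp add: divide_simps)
qed

lemma mediant_ge1:
  fixes N B D :: real
  assumes "0 \<le> B" "0 < D" "D \<le> N"
  shows "1 \<le> (N + B) / (D + B)"
  using assms by (simp add: divide_simps)

lemma frac_mono:
  fixes g L Lb :: real
  assumes "0 < g" "0 < Lb" "Lb \<le> L"
  shows "g * Lb / (g^2 * Lb + 1) \<le> g * L / (g^2 * L + 1)"
proof -
  have "g * Lb * (g^2 * L + 1) \<le> g * L * (g^2 * Lb + 1)"
    using assms by (simp add: algebra_simps power2_eq_square)
  thus ?thesis using assms by (simp add: divide_simps add_pos_nonneg)
qed

theorem proposition5: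
  fixes \<gamma> c \<sigma>2 \<alpha>0 :: real
  assumes "0 < \<gamma>" "\<gamma> < 1" "0 < \<sigma>2" "0 < \<alpha>0" "\<alpha>0 \<le> 1"
  shows "(\<lambda>n. avi_delta \<gamma> c \<sigma>2 \<alpha>0 n) \<longlonglongrightarrow> 1 / (1 - \<gamma>)"
proof -
  define g where "g = 1 - \<gamma>"
  have g0: "0 < g" and g1: "g < 1" using assms by (auto simp: g_def)
  define D where "D m = fst (avi_state \<gamma> c \<sigma>2 \<alpha>0 m)" for m
  define L where "L m = snd (avi_state \<gamma> c \<sigma>2 \<alpha>0 m)" for m
  define A where "A m = avi_alpha \<gamma> c \<sigma>2 (D m) (L m)" for m
  define e where "e m = 1 - g * D m" for m
  have D0: "D 0 = \<alpha>0" and L0: "L 0 = \<alpha>0^2" by (simp_all add: D_def L_def)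
  have DS: "D (Suc m) = A m + (1 - g * A m) * D m" for m
    by (simp add: D_def A_def L_def g_def Let_def split: prod.split)
  have LS: "L (Suc m) = (A m)^2 + (1 - g * A m)^2 * L m" for m
    by (simp add: D_def A_def L_def g_def Let_def split: prod.split)
  have Lnn: "0 \<le> L m" for m
    by (induction m) (simp_all add: L0 LS)
  have eS: "e (Suc m) = (1 - g * A m) * e m" for m
    by (simp add: e_def DS algebra_simps)
  have Aform: "A m = (g * L m * \<sigma>2 + (e m)^2 * c^2) / (g^2 * L m * \<sigma>2 + (e m)^2 * c^2 + \<sigma>2)" for m
    by (simp add: A_def avi_alpha_def e_def g_def)
  have Abnd: "0 \<le> g * A m \<and> g * A m \<le> 1" for m
  proof -
    have l: "0 \<le> L m" by (rule Lnn)
    have p1: "0 \<le> g * L m * \<sigma>2" using l g0 assms by simp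
    have p2: "0 \<le> g^2 * L m * \<sigma>2" using l g0 assms by simp
    have p3: "0 \<le> (e m)^2 * c^2" by simp
    have den: "0 < g^2 * L m * \<sigma>2 + (e m)^2 * c^2 + \<sigma>2" using p2 p3 assms by linarith
    have "g * (g * L m * \<sigma>2 + (e m)^2 * c^2) \<le> g^2 * L m * \<sigma>2 + (e m)^2 * c^2 + \<sigma>2"
    proof -
      have "g * ((e m)^2 * c^2) \<le> (e m)^2 * c^2" using g1 p3 g0
        by (simp add: mult_left_le_one_le)
      thus ?thesis using assms by (simp add: algebra_simps power2_eq_square)
    qed
    hence "g * A m \<le> 1" using den by (simp add: Aform divide_simps)
    moreover have "0 \<le> A m" unfolding Aform using den p1 p3 by simp
    ultimately show ?thesis using g0 by simp
  qed
  have e0: "0 < e 0" "e 0 < 1"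
  proof -
    have "g * \<alpha>0 \<le> g * 1" using assms g0 by (intro mult_left_mono) auto
    hence "g * \<alpha>0 < 1 * 1" using g1 by simp
    thus "0 < e 0" "e 0 < 1" using assms g0 by (auto simp: e_def D0)
  qed
  have e0': "e 0 < 1"
    using e0 by simp
  have enn: "0 \<le> e m" for m
    by (induction m) (use e0 Abnd in \<open>simp_all add: eS\<close>)
  have edec: "e (Suc m) \<le> e m" for m
    using Abnd[of m] enn[of m] by (simp add: eS mult_left_le_one_le)
  have decs: "decseq e" using edec by (rule decseq_SucI)
  have ele0: "e m \<le> e 0" for m using decs by (simp add: decseq_def)
  have inv: "\<alpha>0^2 * (e m)^2 \<le> L m * (e 0)^2" for m
  proof (induction m)
    case 0 show ?case by (simp add: L0 mult.commute)
  next
    case (Suc m)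
    have "\<alpha>0^2 * (e (Suc m))^2 = (1 - g * A m)^2 * (\<alpha>0^2 * (e m)^2)"
      by (simp add: eS power_mult_distrib)
    also have "\<dots> \<le> (1 - g * A m)^2 * (L m * (e 0)^2)"
      using Suc by (simp add: mult_left_mono)
    also have "\<dots> \<le> L (Suc m) * (e 0)^2"
      by (simp add: LS algebra_simps)
    finally show ?case .
  qed
  obtain E where Elim: "e \<longlonglongrightarrow> E" and Ele: "\<forall>i. E \<le> e i"
    using decseq_convergent[OF decs, of 0] enn by blast
  have E0: "E = 0"
  proof (rule ccontr)
    assume "E \<noteq> 0"
    have "0 \<le> E" using LIMSEQ_le_const[OF Elim] enn by auto
    hence Epos: "0 < E" using \<open>E \<noteq> 0\<close> by simp
    define Lb where "Lb = \<alpha>0^2 * E^2 / (e 0)^2"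
    have Lbpos: "0 < Lb" using Epos assms e0 by (simp add: Lb_def)
    have LbL: "Lb \<le> L m" for m
    proof -
      have "\<alpha>0^2 * E^2 \<le> \<alpha>0^2 * (e m)^2"
        using Ele Epos by (intro mult_left_mono power_mono) auto
      also have "\<dots> \<le> L m * (e 0)^2" by (rule inv)
      finally show ?thesis using e0 by (simp add: Lb_def divide_simps)
    qed
    define \<kappa> where "\<kappa> = min 1 (g * Lb / (g^2 * Lb + 1))"
    have kpos: "0 < \<kappa>" using g0 Lbpos by (simp add: \<kappa>_def add_pos_nonneg)
    have Ak: "\<kappa> \<le> A m" for m
    proof -
      define N where "N = g * L m * \<sigma>2"
      define D' where "D' = g^2 * L m * \<sigma>2 + \<sigma>2"
      define B where "B = (e m)^2 * c^2"
      have Am: "A m = (N + B) / (D' + B)" by (simp add: Aform N_def D'_def B_def algebra_simps)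
      have B0: "0 \<le> B" by (simp add: B_def)
      have D'0: "0 < D'" using assms Lnn[of m] g0 by (simp add: D'_def add_nonneg_pos)
      have N0: "0 \<le> N" using assms Lnn[of m] g0 by (simp add: N_def)
      show ?thesis
      proof (cases "D' \<le> N")
        case True
        thus ?thesis using mediant_ge1[OF B0 D'0 True] Am by (simp add: \<kappa>_def)
      next
        case False
        have "N / D' = g * L m / (g^2 * L m + 1)"
        proof -
          have "D' = (g^2 * L m + 1) * \<sigma>2" by (simp add: D'_def algebra_simps)
          moreover have "N = (g * L m) * \<sigma>2" by (simp add: N_def)
          ultimately show ?thesis using assms by simp
        qed
        moreover have "g * Lb / (g^2 * Lb + 1) \<le> g * L m / (g^2 * L m + 1)"
          by (rule frac_mono[OF g0 Lbpos LbL])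
        ultimately have "\<kappa> \<le> N / D'" by (simp add: \<kappa>_def)
        also have "\<dots> \<le> A m" using mediant_ge[OF N0 B0 D'0] False Am by simp
        finally show ?thesis .
      qed
    qed
    define q where "q = 1 - g * \<kappa>"
    have gk1: "g * \<kappa> \<le> 1" using Abnd[of 0] Ak[of 0] g0
      by (meson mult_left_mono less_imp_le order_trans)
    have q0: "0 \<le> q" and q1: "q < 1" using gk1 g0 kpos by (simp_all add: q_def)
    have ebnd: "e m \<le> q^m * e 0" for m
    proof (induction m)
      case 0 show ?case by simp
    next
      case (Suc m)
      have "e (Suc m) = (1 - g * A m) * e m" by (rule eS)
      also have "\<dots> \<le> q * e m"
        using Ak[of m] g0 enn[of m] by (intro mult_right_mono) (simp_all add: q_def)
      also have "\<dots> \<le> q * (q^m * e 0)" using Suc q0 by (simp add: mult_left_mono)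
      finally show ?case by simp
    qed
    have "(\<lambda>m. q^m * e 0) \<longlonglongrightarrow> 0 * e 0"
      by (intro tendsto_mult LIMSEQ_power_zero) (use q0 q1 in auto)
    hence "eventually (\<lambda>m. q^m * e 0 < E) sequentially"
      using Epos by (simp add: order_tendsto_iff)
    then obtain m where "q^m * e 0 < E" by (meson eventually_sequentially order_refl)
    with ebnd[of m] Ele show False by (meson not_le order_trans)
  qed
  have "D = (\<lambda>m. (1 - e m) / g)" using g0 by (auto simp: e_def)
  hence "D \<longlonglongrightarrow> (1 - 0) / g"
  proof -
    have "(\<lambda>m. (1 - e m) / g) \<longlonglongrightarrow> (1 - 0) / g"
      using Elim E0 g0 by (intro tendsto_intros) auto
    thus ?thesis using \<open>D = _\<close> by simp
  qed
  hence "(\<lambda>n. avi_delta \<gamma> c \<sigma>2 \<alpha>0 (n + 1)) \<longlonglongrightarrow> 1 / (1 - \<gamma>)"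
    by (simp add: avi_delta_def D_def[abs_def] g_def)
  thus ?thesis by (rule LIMSEQ_offset)
qed

end
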